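(* Let $f\colon M\to\mathbb H$ be a minimal conformal immersion on a simply connected Riemann surface with right normal $R$ and conjugate $f^*$. Let $\mu\in\mathbb C\setminus\{0,1\}$, $m\in\mathbb H_*$, $\hat a=m\frac{\mu+\mu^{-1}}2m^{-1}$, $\hat b=mi\frac{\mu^{-1}-\mu}2m^{-1}$, $\rho=m\frac{i(1+\mu)}{1-\mu}m^{-1}$, and consider the minimal surface $h=f\hat b+f^*(\hat a-1)$ in the right associated family of $f$, with conjugate $h^*=f^*\hat b-f(\hat a-1)$ and right normal $R_h=(\rho+R)R(\rho+R)^{-1}$. Then $$(fR-f^* )(R+\rho)^{-1}=-\tfrac12\big(hR_h-h^*\big).$$ Consequently every non-constant $\mu$-Darboux transform $f^\sharp=(fR-f^* )(R+\rho)^{-1}$ of $f$ is the associated Willmore surface $gR_g-g^*$ of the minimal surface $g=-\tfrac12 h$ in the right associated family of $f$.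
   Context: Quaternions $\mathbb H$, $\mathbb H_*=\mathbb H\setminus\{0\}$, $\mathbb C=\operatorname{span}_{\mathbb R}\{1,i\}$. $*\omega(X)=\omega(JX)$; right normal defined by $*df=-df\,R$; conjugate surface $df^*=-*df$. The right associated family of $f$ consists of the minimal surfaces $fp+f^*q$, $p,q\in\mathbb H$. For a minimal surface $g$ with right normal $R_g$ and conjugate $g^*$, the associated Willmore surface is $g^\flat=gR_g-g^*$. The non-constant $\mu$-Darboux transforms of $f$ (line bundles spanned by parallel sections of the associated family of flat connections of the conformal Gauss map of $f$ at $\lambda=\mu$, not of the form $(n,0)^t$) are exactly the maps $(fR-f^* )(R+\rho)^{-1}$ with $m\in\mathbb H_*$ and $f^*$ a conjugate surface. *)

theory Defs
  imports "HOL-Analysis.Analysis"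
begin

datatype quat = Quat (qRe: real) (qI: real) (qJ: real) (qK: real)

lemma quat_eq_iff: "x = y \<longleftrightarrow> qRe x = qRe y \<and> qI x = qI y \<and> qJ x = qJ y \<and> qK x = qK y"
  by (cases x; cases y) auto

lemma quat_eqI: "qRe x = qRe y \<Longrightarrow> qI x = qI y \<Longrightarrow> qJ x = qJ y \<Longrightarrow> qK x = qK y \<Longrightarrow> x = y"
  by (simp add: quat_eq_iff)

instantiation quat :: ab_group_add
begin
definition "0 = Quat 0 0 0 0"
definition "x + y = Quat (qRe x + qRe y) (qI x + qI y) (qJ x + qJ y) (qK x + qK y)"
definition "- x = Quat (- qRe x) (- qI x) (- qJ x) (- qK x)"
definition "x - y = Quat (qRe x - qRe y) (qI x - qI y) (qJ x - qJ y) (qK x - qK y)"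
instance by standard (simp_all add: quat_eq_iff zero_quat_def plus_quat_def uminus_quat_def minus_quat_def)
end

lemma quat_add_simps [simp]:
  "qRe 0 = 0" "qI 0 = 0" "qJ 0 = 0" "qK 0 = 0"
  "qRe (x + y) = qRe x + qRe y" "qI (x + y) = qI x + qI y" "qJ (x + y) = qJ x + qJ y" "qK (x + y) = qK x + qK y"
  "qRe (- x) = - qRe x" "qI (- x) = - qI x" "qJ (- x) = - qJ x" "qK (- x) = - qK x"
  "qRe (x - y) = qRe x - qRe y" "qI (x - y) = qI x - qI y" "qJ (x - y) = qJ x - qJ y" "qK (x - y) = qK x - qK y"
  by (simp_all add: zero_quat_def plus_quat_def uminus_quat_def minus_quat_def)

instantiation quat :: "{real_vector, ring_1}"
begin
definition "scaleR r x = Quat (r * qRe x) (r * qI x) (r * qJ x) (r * qK x)"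
definition "1 = Quat 1 0 0 0"
definition "x * y = Quat
   (qRe x * qRe y - qI x * qI y - qJ x * qJ y - qK x * qK y)
   (qRe x * qI y + qI x * qRe y + qJ x * qK y - qK x * qJ y)
   (qRe x * qJ y - qI x * qK y + qJ x * qRe y + qK x * qI y)
   (qRe x * qK y + qI x * qJ y - qJ x * qI y + qK x * qRe y)"
instance by standard
  (simp_all add: quat_eq_iff scaleR_quat_def one_quat_def times_quat_def algebra_simps)
end

lemma quat_mult_simps [simp]:
  "qRe (r *\<^sub>R x) = r * qRe x" "qI (r *\<^sub>R x) = r * qI x" "qJ (r *\<^sub>R x) = r * qJ x" "qK (r *\<^sub>R x) = r * qK x"
  "qRe 1 = 1" "qI 1 = 0" "qJ 1 = 0" "qK 1 = 0"
  "qRe (x * y) = qRe x * qRe y - qI x * qI y - qJ x * qJ y - qK x * qK y"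
  "qI (x * y) = qRe x * qI y + qI x * qRe y + qJ x * qK y - qK x * qJ y"
  "qJ (x * y) = qRe x * qJ y - qI x * qK y + qJ x * qRe y + qK x * qI y"
  "qK (x * y) = qRe x * qK y + qI x * qJ y - qJ x * qI y + qK x * qRe y"
  by (simp_all add: scaleR_quat_def one_quat_def times_quat_def)

definition quat_sqnorm :: "quat \<Rightarrow> real" where
  "quat_sqnorm x = (qRe x)\<^sup>2 + (qI x)\<^sup>2 + (qJ x)\<^sup>2 + (qK x)\<^sup>2"

lemma quat_sqnorm_eq_0: "quat_sqnorm x = 0 \<longleftrightarrow> x = 0"
  by (simp add: quat_sqnorm_def quat_eq_iff sum_power2_eq_zero_iff add_nonneg_eq_0_iff)

lemma quat_sqnorm_L2: "quat_sqnorm x = (L2_set (\<lambda>n::nat. [qRe x, qI x, qJ x, qK x] ! n) {0..<4})\<^sup>2"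
proof -
  have "{0..<4::nat} = {0,1,2,3}" by auto
  then show ?thesis by (simp add: L2_set_def quat_sqnorm_def sum_nonneg)
qed

instantiation quat :: division_ring
begin
definition "inverse x = Quat (qRe x / quat_sqnorm x) (- qI x / quat_sqnorm x)
                            (- qJ x / quat_sqnorm x) (- qK x / quat_sqnorm x)"
definition "x div (y::quat) = x * inverse y"
instance
proof
  fix x y :: quat
  show "x \<noteq> 0 \<Longrightarrow> inverse x * x = 1"
  proof -
    assume "x \<noteq> 0"
    then have s: "quat_sqnorm x \<noteq> 0" by (simp add: quat_sqnorm_eq_0)
    have e: "(qRe x * qRe x + qI x * qI x + qJ x * qJ x + qK x * qK x) / quat_sqnorm x = 1"
      using s by (simp add: quat_sqnorm_def power2_eq_square)
    show ?thesis using e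
      by (simp add: quat_eq_iff inverse_quat_def times_quat_def one_quat_def
          add_divide_distrib diff_divide_distrib algebra_simps)
  qed
  show "x \<noteq> 0 \<Longrightarrow> x * inverse x = 1"
  proof -
    assume "x \<noteq> 0"
    then have s: "quat_sqnorm x \<noteq> 0" by (simp add: quat_sqnorm_eq_0)
    have e: "(qRe x * qRe x + qI x * qI x + qJ x * qJ x + qK x * qK x) / quat_sqnorm x = 1"
      using s by (simp add: quat_sqnorm_def power2_eq_square)
    show ?thesis using e
      by (simp add: quat_eq_iff inverse_quat_def times_quat_def one_quat_def
          add_divide_distrib diff_divide_distrib algebra_simps)
  qed
  show "x div y = x * inverse y" by (simp add: divide_quat_def)
  show "inverse (0::quat) = 0" by (simp add: inverse_quat_def zero_quat_def)
qed
end

lemma quat_sqnorm_mult: "quat_sqnorm (x * y) = quat_sqnorm x * quat_sqnorm y"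
  by (simp add: quat_sqnorm_def power2_eq_square algebra_simps)

instantiation quat :: real_normed_div_algebra
begin
definition "norm x = sqrt (quat_sqnorm x)"
definition "sgn x = x /\<^sub>R norm x" for x :: quat
definition "dist x y = norm (x - y)" for x y :: quat
definition "(uniformity :: (quat \<times> quat) filter) = (INF e\<in>{0 <..}. principal {(x, y). dist x y < e})"
definition "open (U :: quat set) \<longleftrightarrow> (\<forall>x\<in>U. eventually (\<lambda>(x', y). x' = x \<longrightarrow> y \<in> U) uniformity)"
instance
proof
  fix r :: real and x y :: quat
  show "(norm x = 0) = (x = 0)" by (simp add: norm_quat_def quat_sqnorm_eq_0)
  have L: "norm z = L2_set (\<lambda>n::nat. [qRe z, qI z, qJ z, qK z] ! n) {0..<4}" for z :: quat
    unfolding norm_quat_def quat_sqnorm_L2 by (simp add: L2_set_nonneg)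
  have "L2_set (\<lambda>n::nat. [qRe (x+y), qI (x+y), qJ (x+y), qK (x+y)] ! n) {0..<4}
     = L2_set (\<lambda>n::nat. [qRe x, qI x, qJ x, qK x] ! n + [qRe y, qI y, qJ y, qK y] ! n) {0..<4}"
  proof (rule L2_set_cong)
    fix n :: nat assume "n \<in> {0..<4}"
    then have "n = 0 \<or> n = 1 \<or> n = 2 \<or> n = 3" by auto
    then show "[qRe (x+y), qI (x+y), qJ (x+y), qK (x+y)] ! n
       = [qRe x, qI x, qJ x, qK x] ! n + [qRe y, qI y, qJ y, qK y] ! n" by auto
  qed simp
  then show "norm (x + y) \<le> norm x + norm y"
    unfolding L by (metis L2_set_triangle_ineq)
  show "norm (r *\<^sub>R x) = \<bar>r\<bar> * norm x"
    by (simp add: norm_quat_def quat_sqnorm_def power_mult_distrib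
        flip: distrib_left real_sqrt_abs real_sqrt_mult)
  show "norm (x * y) = norm x * norm y"
    by (simp add: norm_quat_def quat_sqnorm_mult real_sqrt_mult)
  show "(r *\<^sub>R x) * y = r *\<^sub>R (x * y)" by (simp add: quat_eq_iff algebra_simps)
  show "x * (r *\<^sub>R y) = r *\<^sub>R (x * y)" by (simp add: quat_eq_iff algebra_simps)
qed (simp_all add: sgn_quat_def dist_quat_def open_quat_def uniformity_quat_def)
end

definition quat_of_complex :: "complex \<Rightarrow> quat" where
  "quat_of_complex z = Quat (Re z) (Im z) 0 0"

text \<open>The surface is parametrised by an open subset \<open>U\<close> of \<open>\<complex>\<close> with its standard complex
  structure \<open>J X = \<i> X\<close>.  \<open>d f p\<close> is the differential of \<open>f\<close> at \<open>p\<close>, and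
  \<open>hodge_d f p X = d f p (J X)\<close> is \<open>*df\<close>.\<close>

definition d :: "(complex \<Rightarrow> quat) \<Rightarrow> complex \<Rightarrow> complex \<Rightarrow> quat" where
  "d f p = frechet_derivative f (at p)"

definition hodge_d :: "(complex \<Rightarrow> quat) \<Rightarrow> complex \<Rightarrow> complex \<Rightarrow> quat" where
  "hodge_d f p X = d f p (\<i> * X)"

definition conformal_immersion :: "complex set \<Rightarrow> (complex \<Rightarrow> quat) \<Rightarrow> bool" where
  "conformal_immersion U f \<longleftrightarrow> f differentiable_on U \<and>
     (\<forall>p\<in>U. inj (d f p) \<and>
        (\<exists>N R. N * N = -1 \<and> R * R = -1 \<and>
           (\<forall>X. hodge_d f p X = N * d f p X) \<and> (\<forall>X. hodge_d f p X = - (d f p X * R))))"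

text \<open>Harmonicity \<open>f\<^sub>x\<^sub>x + f\<^sub>y\<^sub>y = 0\<close>; a conformal immersion is minimal iff it is harmonic.\<close>

definition harmonic_on :: "complex set \<Rightarrow> (complex \<Rightarrow> quat) \<Rightarrow> bool" where
  "harmonic_on U f \<longleftrightarrow> f differentiable_on U \<and>
     (\<forall>X. (\<lambda>z. d f z X) differentiable_on U) \<and>
     (\<forall>p\<in>U. d (\<lambda>z. d f z 1) p 1 + d (\<lambda>z. d f z \<i>) p \<i> = 0)"

definition minimal_conformal_immersion :: "complex set \<Rightarrow> (complex \<Rightarrow> quat) \<Rightarrow> bool" where
  "minimal_conformal_immersion U f \<longleftrightarrow> conformal_immersion U f \<and> harmonic_on U f"

definition is_right_normal :: "complex set \<Rightarrow> (complex \<Rightarrow> quat) \<Rightarrow> (complex \<Rightarrow> quat) \<Rightarrow> bool" where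
  "is_right_normal U f R \<longleftrightarrow> (\<forall>p\<in>U. \<forall>X. hodge_d f p X = - (d f p X * R p))"

definition is_conjugate :: "complex set \<Rightarrow> (complex \<Rightarrow> quat) \<Rightarrow> (complex \<Rightarrow> quat) \<Rightarrow> bool" where
  "is_conjugate U f fs \<longleftrightarrow> fs differentiable_on U \<and>
     (\<forall>p\<in>U. \<forall>X. d fs p X = - hodge_d f p X)"

definition in_right_assoc_family ::
  "complex set \<Rightarrow> (complex \<Rightarrow> quat) \<Rightarrow> (complex \<Rightarrow> quat) \<Rightarrow> (complex \<Rightarrow> quat) \<Rightarrow> bool" where
  "in_right_assoc_family U f fs g \<longleftrightarrow> (\<exists>p q. \<forall>z\<in>U. g z = f z * p + fs z * q)"

definition assoc_willmore :: "(complex \<Rightarrow> quat) \<Rightarrow> (complex \<Rightarrow> quat) \<Rightarrow> (complex \<Rightarrow> quat) \<Rightarrow> complex \<Rightarrow> quat" where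
  "assoc_willmore g Rg gs z = g z * Rg z - gs z"

end

theory Submission
  imports Defs
begin


lemma mvt_real:
  fixes \<phi> :: "real \<Rightarrow> 'b::real_normed_vector"
  assumes t: "t \<ge> 0"
    and der: "\<And>s. s \<in> {0..t} \<Longrightarrow> (\<phi> has_vector_derivative v s) (at s within {0..t})"
    and B: "\<And>s. s \<in> {0..t} \<Longrightarrow> norm (v s) \<le> B"
  shows "norm (\<phi> t - \<phi> 0) \<le> B * t"
proof -
  have "norm (\<phi> t - \<phi> 0) \<le> B * norm (t - 0)"
  proof (rule differentiable_bound[where f' = "\<lambda>s h. h *\<^sub>R v s"])
    show "convex {0..t}" by simp
    show "(\<phi> has_derivative (\<lambda>h. h *\<^sub>R v s)) (at s within {0..t})" if "s \<in> {0..t}" for s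
      using der[OF that] by (simp add: has_vector_derivative_def)
    show "onorm (\<lambda>h. h *\<^sub>R v s) \<le> B" if "s \<in> {0..t}" for s
      by (rule onorm_le) (use B[OF that] in \<open>metis abs_ge_zero mult.commute mult_left_mono norm_scaleR real_norm_def\<close>)
  qed (use t in auto)
  then show ?thesis using t by simp
qed

lemma hvd_line:
  fixes f :: "complex \<Rightarrow> 'b::real_normed_vector"
  assumes "(f has_derivative D) (at (a + of_real s * w))" and "linear D"
  shows "((\<lambda>s. f (a + of_real s * w)) has_vector_derivative D w) (at s)"
proof -
  have 1: "((\<lambda>s::real. a + of_real s * w) has_derivative (\<lambda>h. of_real h * w)) (at s)"
    by (auto intro!: derivative_eq_intros)
  have "((f \<circ> (\<lambda>s::real. a + of_real s * w)) has_derivative (D \<circ> (\<lambda>h. of_real h * w))) (at s)"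
    by (rule diff_chain_at[OF 1 assms(1)])
  moreover have "D \<circ> (\<lambda>h. of_real h * w) = (\<lambda>h. h *\<^sub>R D w)"
    using assms(2) by (auto simp: fun_eq_iff linear_scale scaleR_conv_of_real[symmetric])
  ultimately show ?thesis by (simp add: has_vector_derivative_def o_def)
qed

lemma young:
  fixes f :: "complex \<Rightarrow> 'b::real_normed_vector"
  assumes r: "r > 0" and fd: "\<And>z. z \<in> ball p r \<Longrightarrow> (f has_derivative D z) (at z)"
    and d1: "((\<lambda>z. D z 1) has_derivative A1) (at p)"
    and di: "((\<lambda>z. D z \<i>) has_derivative Ai) (at p)"
  shows "A1 \<i> = Ai 1"
proof -
  have bl1: "bounded_linear A1" and bli: "bounded_linear Ai"
    using d1 di by (auto dest: has_derivative_bounded_linear)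
  have linD: "linear (D z)" if "z \<in> ball p r" for z
    using fd[OF that] by (rule has_derivative_linear)
  have main: "norm (A1 \<i> - Ai 1) \<le> 6 * e" if e: "e > 0" for e
  proof -
    obtain e1 where e1: "e1 > 0" "\<And>y. norm (y - p) < e1 \<Longrightarrow> norm (D y 1 - D p 1 - A1 (y - p)) \<le> e * norm (y - p)"
      using d1 e unfolding has_derivative_at_alt by blast
    obtain e2 where e2: "e2 > 0" "\<And>y. norm (y - p) < e2 \<Longrightarrow> norm (D y \<i> - D p \<i> - Ai (y - p)) \<le> e * norm (y - p)"
      using di e unfolding has_derivative_at_alt by blast
    define t where "t = min r (min e1 e2) / 4"
    have t0: "t > 0" using r e1 e2 by (simp add: t_def)
    have tr: "2 * t < r" "2 * t < e1" "2 * t < e2" using r e1 e2 t0 by (auto simp: t_def)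
    have nb: "norm (of_real x + \<i> * of_real y :: complex) \<le> 2 * t" if "x \<in> {0..t}" "y \<in> {0..t}" for x y
    proof -
      have "norm (of_real x + \<i> * of_real y :: complex) \<le> norm (of_real x :: complex) + norm (\<i> * of_real y)"
        by (rule norm_triangle_ineq)
      also have "\<dots> = \<bar>x\<bar> + \<bar>y\<bar>" by (simp add: norm_mult)
      also have "\<dots> \<le> 2 * t" using that by auto
      finally show ?thesis .
    qed
    have inball: "p + (of_real x + \<i> * of_real y) \<in> ball p r" if "x \<in> {0..t}" "y \<in> {0..t}" for x y
    proof -
      have "dist p (p + (of_real x + \<i> * of_real y)) = norm (of_real x + \<i> * of_real y :: complex)"
        by (metis add_diff_cancel_left' dist_commute dist_norm)
      then show ?thesis using nb[OF that] tr by simp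
    qed
    define \<Delta> where "\<Delta> = f (p + (of_real t + \<i> * of_real t)) - f (p + (of_real t + \<i> * of_real 0))
       - f (p + (of_real 0 + \<i> * of_real t)) + f (p + (of_real 0 + \<i> * of_real 0))"
    define \<phi> where "\<phi> s = f ((p + \<i> * of_real t) + of_real s * 1) - f (p + of_real s * 1) - (s * t) *\<^sub>R A1 \<i>" for s
    define v where "v s = D (p + (of_real s + \<i> * of_real t)) 1 - D (p + (of_real s + \<i> * of_real 0)) 1 - t *\<^sub>R A1 \<i>" for s
    have "norm (\<phi> t - \<phi> 0) \<le> (3 * e * t) * t"
    proof (rule mvt_real)
      fix s assume s: "s \<in> {0..t}"
      have a1: "(p + \<i> * of_real t) + of_real s * 1 = p + (of_real s + \<i> * of_real t)" by (simp add: algebra_simps)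
      have a2: "p + of_real s * 1 = p + (of_real s + \<i> * of_real 0)" by simp
      have h1: "((\<lambda>s. f ((p + \<i> * of_real t) + of_real s * 1)) has_vector_derivative D (p + (of_real s + \<i> * of_real t)) 1) (at s)"
        apply (rule hvd_line)
        apply (subst a1) apply (rule fd, rule inball) using s t0 apply auto[2]
        apply (rule linD, rule inball) using s t0 by auto
      have h2: "((\<lambda>s. f (p + of_real s * 1)) has_vector_derivative D (p + (of_real s + \<i> * of_real 0)) 1) (at s)"
        apply (rule hvd_line)
        apply (subst a2) apply (rule fd, rule inball) using s t0 apply auto[2]
        apply (rule linD, rule inball) using s t0 by auto
      have h3: "((\<lambda>s. (s * t) *\<^sub>R A1 \<i>) has_vector_derivative t *\<^sub>R A1 \<i>) (at s)"
        by (auto intro!: derivative_eq_intros simp: has_vector_derivative_def algebra_simps fun_eq_iff)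
      show "(\<phi> has_vector_derivative v s) (at s within {0..t})"
        unfolding \<phi>_def[abs_def] v_def
        by (rule has_vector_derivative_at_within) (intro has_vector_derivative_diff h1 h2 h3)
      let ?y1 = "p + (of_real s + \<i> * of_real t)" and ?y2 = "p + (of_real s + \<i> * of_real 0)"
      have n1: "norm (?y1 - p) \<le> 2 * t" using nb s t0 by simp
      have n2: "norm (?y2 - p) \<le> t" using s by simp
      have E1: "norm (D ?y1 1 - D p 1 - A1 (?y1 - p)) \<le> e * (2 * t)"
        using e1(2)[of ?y1] n1 tr e by (smt (verit) mult_left_mono)
      have E2: "norm (D ?y2 1 - D p 1 - A1 (?y2 - p)) \<le> e * t"
        using e2(2)[of ?y2] e1(2)[of ?y2] n2 tr e t0 by (smt (verit) mult_left_mono)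
      have lin: "A1 (?y1 - p) - A1 (?y2 - p) = t *\<^sub>R A1 \<i>"
      proof -
        have "A1 (?y1 - p) - A1 (?y2 - p) = A1 ((?y1 - p) - (?y2 - p))"
          by (rule linear_diff[OF bounded_linear.linear[OF bl1], symmetric])
        also have "(?y1 - p) - (?y2 - p) = t *\<^sub>R \<i>" by (simp add: scaleR_conv_of_real)
        also have "A1 (t *\<^sub>R \<i>) = t *\<^sub>R A1 \<i>" using bl1 by (simp add: linear_scale bounded_linear.linear)
        finally show ?thesis .
      qed
      have "v s = (D ?y1 1 - D p 1 - A1 (?y1 - p)) - (D ?y2 1 - D p 1 - A1 (?y2 - p))"
        unfolding v_def using lin by (simp add: algebra_simps)
      then have "norm (v s) \<le> e * (2 * t) + e * t"
        using E1 E2 norm_triangle_ineq4 by (smt (verit))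
      then show "norm (v s) \<le> 3 * e * t" by (simp add: algebra_simps)
    qed (use t0 in simp)
    moreover have "\<phi> t - \<phi> 0 = \<Delta> - (t * t) *\<^sub>R A1 \<i>"
      unfolding \<phi>_def \<Delta>_def by (simp add: algebra_simps)
    ultimately have est1: "norm (\<Delta> - (t * t) *\<^sub>R A1 \<i>) \<le> 3 * e * t * t" by simp
    define \<psi> where "\<psi> s = f ((p + of_real t) + of_real s * \<i>) - f (p + of_real s * \<i>) - (s * t) *\<^sub>R Ai 1" for s
    define w where "w s = D (p + (of_real t + \<i> * of_real s)) \<i> - D (p + (of_real 0 + \<i> * of_real s)) \<i> - t *\<^sub>R Ai 1" for s
    have "norm (\<psi> t - \<psi> 0) \<le> (3 * e * t) * t"
    proof (rule mvt_real)
      fix s assume s: "s \<in> {0..t}"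
      have a1: "(p + of_real t) + of_real s * \<i> = p + (of_real t + \<i> * of_real s)" by (simp add: algebra_simps)
      have a2: "p + of_real s * \<i> = p + (of_real 0 + \<i> * of_real s)" by (simp add: algebra_simps)
      have h1: "((\<lambda>s. f ((p + of_real t) + of_real s * \<i>)) has_vector_derivative D (p + (of_real t + \<i> * of_real s)) \<i>) (at s)"
        apply (rule hvd_line[where D="D (p + (of_real t + \<i> * of_real s))" and w="\<i>"])
        apply (subst a1) apply (rule fd, rule inball) using s t0 apply auto[2]
        apply (rule linD, rule inball) using s t0 by auto
      have h2: "((\<lambda>s. f (p + of_real s * \<i>)) has_vector_derivative D (p + (of_real 0 + \<i> * of_real s)) \<i>) (at s)"
        apply (rule hvd_line[where D="D (p + (of_real 0 + \<i> * of_real s))" and w="\<i>"])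
        apply (subst a2) apply (rule fd, rule inball) using s t0 apply auto[2]
        apply (rule linD, rule inball) using s t0 by auto
      have h3: "((\<lambda>s. (s * t) *\<^sub>R Ai 1) has_vector_derivative t *\<^sub>R Ai 1) (at s)"
        by (auto intro!: derivative_eq_intros simp: has_vector_derivative_def algebra_simps fun_eq_iff)
      show "(\<psi> has_vector_derivative w s) (at s within {0..t})"
        unfolding \<psi>_def[abs_def] w_def
        by (rule has_vector_derivative_at_within) (intro has_vector_derivative_diff h1 h2 h3)
      let ?y1 = "p + (of_real t + \<i> * of_real s)" and ?y2 = "p + (of_real 0 + \<i> * of_real s)"
      have n1: "norm (?y1 - p) \<le> 2 * t" using nb s t0 by simp
      have n2: "norm (?y2 - p) \<le> t" using s by (simp add: norm_mult)
      have E1: "norm (D ?y1 \<i> - D p \<i> - Ai (?y1 - p)) \<le> e * (2 * t)"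
        using e2(2)[of ?y1] n1 tr e by (smt (verit) mult_left_mono)
      have E2: "norm (D ?y2 \<i> - D p \<i> - Ai (?y2 - p)) \<le> e * t"
        using e2(2)[of ?y2] n2 tr e t0 by (smt (verit) mult_left_mono)
      have lin: "Ai (?y1 - p) - Ai (?y2 - p) = t *\<^sub>R Ai 1"
      proof -
        have "Ai (?y1 - p) - Ai (?y2 - p) = Ai ((?y1 - p) - (?y2 - p))"
          by (rule linear_diff[OF bounded_linear.linear[OF bli], symmetric])
        also have "(?y1 - p) - (?y2 - p) = t *\<^sub>R 1" by (simp add: scaleR_conv_of_real)
        also have "Ai (t *\<^sub>R 1) = t *\<^sub>R Ai 1" using bli by (simp add: linear_scale bounded_linear.linear)
        finally show ?thesis .
      qed
      have "w s = (D ?y1 \<i> - D p \<i> - Ai (?y1 - p)) - (D ?y2 \<i> - D p \<i> - Ai (?y2 - p))"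
        unfolding w_def using lin by (simp add: algebra_simps)
      then have "norm (w s) \<le> e * (2 * t) + e * t"
        using E1 E2 norm_triangle_ineq4 by (smt (verit))
      then show "norm (w s) \<le> 3 * e * t" by (simp add: algebra_simps)
    qed (use t0 in simp)
    moreover have "\<psi> t - \<psi> 0 = \<Delta> - (t * t) *\<^sub>R Ai 1"
      unfolding \<psi>_def \<Delta>_def by (simp add: algebra_simps)
    ultimately have est2: "norm (\<Delta> - (t * t) *\<^sub>R Ai 1) \<le> 3 * e * t * t" by simp
    have "(t * t) *\<^sub>R (A1 \<i> - Ai 1) = (\<Delta> - (t * t) *\<^sub>R Ai 1) - (\<Delta> - (t * t) *\<^sub>R A1 \<i>)"
      by (simp add: algebra_simps)
    then have "norm ((t * t) *\<^sub>R (A1 \<i> - Ai 1)) \<le> 3 * e * t * t + 3 * e * t * t"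
      using est1 est2 norm_triangle_ineq4 by (smt (verit))
    moreover have "norm ((t * t) *\<^sub>R (A1 \<i> - Ai 1)) = (t * t) * norm (A1 \<i> - Ai 1)"
      using t0 by simp
    ultimately have "(t * t) * norm (A1 \<i> - Ai 1) \<le> (t * t) * (6 * e)"
      by (simp add: algebra_simps)
    then show ?thesis using t0 by (simp add: mult_le_cancel_left_pos)
  qed
  show ?thesis
  proof (rule ccontr)
    assume "A1 \<i> \<noteq> Ai 1"
    then have "norm (A1 \<i> - Ai 1) > 0" by simp
    with main[of "norm (A1 \<i> - Ai 1) / 12"] show False by simp
  qed
qed



lemma unit_imag:
  assumes "R * R = (-1::quat)"
  shows "qRe R = 0 \<and> (qI R)^2 + (qJ R)^2 + (qK R)^2 = 1"
proof -
  have e: "qRe R * qRe R - qI R * qI R - qJ R * qJ R - qK R * qK R = -1"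
    "qRe R * qI R = 0" "qRe R * qJ R = 0" "qRe R * qK R = 0"
    using assms by (auto simp: quat_eq_iff)
  have "qRe R = 0"
  proof (rule ccontr)
    assume "qRe R \<noteq> 0"
    then have "qI R = 0" "qJ R = 0" "qK R = 0" using e by auto
    with e(1) have "qRe R * qRe R = -1" by simp
    then show False by (smt (verit) zero_le_square)
  qed
  with e(1) show ?thesis by (simp add: power2_eq_square)
qed

lemma core_comm:
  fixes R :: quat and c \<kappa> :: complex
  assumes "R * R = -1" and "Im (\<kappa> * (1 + c * c)) = 0"
  shows "(quat_of_complex c + R) * quat_of_complex \<kappa> * (quat_of_complex c + R) * R
       = R * ((quat_of_complex c + R) * quat_of_complex \<kappa> * (quat_of_complex c + R))"
proof -
  obtain x y z where R: "R = Quat 0 x y z" and n: "x^2 + y^2 + z^2 = 1"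
    using unit_imag[OF assms(1)] by (cases R) auto
  obtain c1 c2 where c: "c = Complex c1 c2" by (cases c)
  obtain k1 k2 where k: "\<kappa> = Complex k1 k2" by (cases \<kappa>)
  have h: "k1 * (2 * c1 * c2) + k2 * (1 + c1 * c1 - c2 * c2) = 0"
    using assms(2) by (simp add: c k algebra_simps)
  show ?thesis
    unfolding quat_eq_iff using n h
    by (simp add: R c k quat_of_complex_def power2_eq_square; algebra)
qed

abbreviation qc :: "complex \<Rightarrow> quat" where "qc \<equiv> quat_of_complex"

lemma qc_add: "qc (z + w) = qc z + qc w" and qc_mult: "qc (z * w) = qc z * qc w"
  and qc_one: "qc 1 = 1" and qc_zero: "qc 0 = 0" and qc_diff: "qc (z - w) = qc z - qc w"
  and qc_minus: "qc (- z) = - qc z"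
  by (simp_all add: quat_eq_iff quat_of_complex_def)

lemma qc_inj: "qc z = qc w \<Longrightarrow> z = w"
  by (simp add: quat_eq_iff quat_of_complex_def complex_eq_iff)

lemma qc_numeral: "qc (numeral n) = numeral n"
proof -
  have "qc (of_nat k) = of_nat k" for k
    by (induction k) (simp_all add: qc_add qc_one qc_zero)
  from this[of "numeral n"] show ?thesis by simp
qed

definition cj :: "quat \<Rightarrow> quat \<Rightarrow> quat" where "cj m x = m * x * inverse m"

lemma cj_add: "cj m (x + y) = cj m x + cj m y" and cj_diff: "cj m (x - y) = cj m x - cj m y"
  and cj_minus: "cj m (- x) = - cj m x"
  by (simp_all add: cj_def algebra_simps)

lemma cj_mult: "m \<noteq> 0 \<Longrightarrow> cj m (x * y) = cj m x * cj m y"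
proof -
  assume m: "m \<noteq> 0"
  have "m * x * inverse m * (m * y * inverse m) = m * x * (inverse m * m) * y * inverse m"
    by (simp add: mult.assoc)
  also have "\<dots> = m * x * y * inverse m" using m by simp
  finally show ?thesis unfolding cj_def by (simp only: mult.assoc)
qed

lemma cj_one: "m \<noteq> 0 \<Longrightarrow> cj m 1 = 1"
  by (simp add: cj_def)

lemma cj_numeral: "m \<noteq> 0 \<Longrightarrow> cj m (numeral n) = numeral n"
proof -
  assume m: "m \<noteq> 0"
  have "cj m (of_nat k) = of_nat k" for k
    by (induction k) (simp_all add: cj_add cj_one m, simp add: cj_def)
  from this[of "numeral n"] show ?thesis by simp
qed

lemma cj_back: "m \<noteq> 0 \<Longrightarrow> cj m (inverse m * R * m) = R"
proof -
  assume m: "m \<noteq> 0"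
  have "m * (inverse m * R * m) * inverse m = (m * inverse m) * R * (m * inverse m)"
    by (simp add: mult.assoc)
  then show ?thesis using m by (simp add: cj_def)
qed

lemma cj_inv: "m \<noteq> 0 \<Longrightarrow> inverse m * cj m x * m = x"
proof -
  assume m: "m \<noteq> 0"
  have "inverse m * (m * x * inverse m) * m = (inverse m * m) * x * (inverse m * m)"
    by (simp add: mult.assoc)
  then show ?thesis using m by (simp add: cj_def)
qed

lemma cj_inj: "m \<noteq> 0 \<Longrightarrow> cj m x = cj m y \<Longrightarrow> x = y"
  by (metis cj_inv)

lemma cj_zero_iff: "m \<noteq> 0 \<Longrightarrow> cj m x = 0 \<longleftrightarrow> x = 0"
  by (simp add: cj_def)

lemma pointalg:
  fixes m R :: quat and \<mu> :: complex
  assumes "\<mu> \<noteq> 0" "\<mu> \<noteq> 1" "m \<noteq> 0" "R * R = -1"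
  defines "a \<equiv> m * quat_of_complex ((\<mu> + inverse \<mu>) / 2) * inverse m"
    and "b \<equiv> m * quat_of_complex (\<i> * (inverse \<mu> - \<mu>) / 2) * inverse m"
    and "\<rho> \<equiv> m * quat_of_complex (\<i> * (1 + \<mu>) / (1 - \<mu>)) * inverse m"
  shows "b = \<rho> * (a - 1)" "a - 1 \<noteq> 0" "\<rho> + R \<noteq> 0" "(a - 1) * \<rho> = \<rho> * (a - 1)"
    "(a - 1) * (1 + \<rho> * \<rho>) = -2"
    "(\<rho> + R) * (a - 1) * (\<rho> + R) * R = R * ((\<rho> + R) * (a - 1) * (\<rho> + R))"
proof -
  define K where "K = (\<mu> + inverse \<mu>) / 2 - 1"
  define P where "P = \<i> * (1 + \<mu>) / (1 - \<mu>)"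
  define B where "B = \<i> * (inverse \<mu> - \<mu>) / 2"
  have m1: "1 - \<mu> \<noteq> 0" using assms(2) by simp
  have KB: "B = P * K" unfolding B_def P_def K_def using assms(1) m1
    by (simp add: field_simps)
  have m2: "1 + \<mu> * \<mu> - \<mu> * 2 \<noteq> 0"
  proof
    assume "1 + \<mu> * \<mu> - \<mu> * 2 = 0"
    then have "(1 - \<mu>) * (1 - \<mu>) = 0" by (simp add: algebra_simps)
    then show False using m1 by simp
  qed
  have K': "K = (1 - \<mu>) * (1 - \<mu>) / (2 * \<mu>)" unfolding K_def using assms(1)
    by (simp add: field_simps; simp add: algebra_simps)
  have P': "1 + P * P = - 4 * \<mu> / ((1 - \<mu>) * (1 - \<mu>))" unfolding P_def using m1 m2
    by (simp add: field_simps; simp add: algebra_simps)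
  have gen: "\<And>q. q \<noteq> 0 \<Longrightarrow> q / (2 * \<mu>) * (- 4 * \<mu> / q) = -2"
    using assms(1) by (simp add: field_simps)
  have KP: "K * (1 + P * P) = -2" unfolding K' P' using m1 by (intro gen) simp
  have K0: "K \<noteq> 0" using KP by auto
  have ak: "a - 1 = cj m (qc K)"
    unfolding a_def K_def cj_def[symmetric] using assms(3)
    by (simp add: qc_diff qc_one cj_diff cj_one)
  have rc: "\<rho> = cj m (qc P)" unfolding \<rho>_def P_def cj_def ..
  have bc: "b = cj m (qc B)" unfolding b_def B_def cj_def ..
  define R' where "R' = inverse m * R * m"
  have RR: "R = cj m R'" unfolding R'_def using assms(3) by (simp add: cj_back)
  have R'2: "R' * R' = -1"
  proof -
    have "cj m (R' * R') = cj m (-1)" using assms(3) assms(4) RR by (simp add: cj_mult cj_minus cj_one)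
    then show ?thesis using assms(3) by (rule cj_inj[rotated])
  qed
  show "b = \<rho> * (a - 1)" using assms(3) by (simp add: bc rc ak KB qc_mult cj_mult)
  have "qc K \<noteq> 0" using K0 by (metis qc_inj qc_zero)
  then show "a - 1 \<noteq> 0" using assms(3) by (simp add: ak cj_zero_iff)
  have e1: "(a - 1) * \<rho> = cj m (qc (K * P))" by (simp add: rc ak cj_mult[OF assms(3)] qc_mult)
  have e2: "\<rho> * (a - 1) = cj m (qc (P * K))" by (simp add: rc ak cj_mult[OF assms(3)] qc_mult)
  show "(a - 1) * \<rho> = \<rho> * (a - 1)" unfolding e1 e2 by (simp add: mult.commute)
  have e3: "(a - 1) * (1 + \<rho> * \<rho>) = cj m (qc (K * (1 + P * P)))"
    by (simp add: rc ak cj_mult[OF assms(3)] cj_add cj_one[OF assms(3)] qc_mult qc_add qc_one)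
  have e4: "qc (-2) = -2" by (simp add: qc_minus qc_numeral)
  show "(a - 1) * (1 + \<rho> * \<rho>) = -2" unfolding e3 KP e4
    by (simp add: cj_minus cj_numeral[OF assms(3)])
  show "\<rho> + R \<noteq> 0"
  proof
    assume "\<rho> + R = 0"
    then have "cj m (qc P + R') = 0" using assms(3) by (simp add: rc RR cj_add)
    then have "R' = - qc P" using assms(3) by (simp add: cj_zero_iff eq_neg_iff_add_eq_0 add.commute)
    then have "qc (P * P) = qc (-1)" using R'2 by (simp add: qc_mult qc_minus qc_one)
    then have "P * P = -1" by (rule qc_inj)
    then show False using KP by simp
  qed
  have im: "Im (K * (1 + P * P)) = 0" using KP by simp
  have C: "(qc P + R') * qc K * (qc P + R') * R' = R' * ((qc P + R') * qc K * (qc P + R'))"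
    by (rule core_comm[OF R'2 im])
  have "cj m ((qc P + R') * qc K * (qc P + R') * R') = cj m (R' * ((qc P + R') * qc K * (qc P + R')))"
    using C by simp
  then show "(\<rho> + R) * (a - 1) * (\<rho> + R) * R = R * ((\<rho> + R) * (a - 1) * (\<rho> + R))"
    using assms(3) by (simp add: cj_mult cj_add rc ak RR)
qed



lemma d_cong:
  assumes "open U" "p \<in> U" "\<And>z. z \<in> U \<Longrightarrow> F z = G z"
  shows "d F p = d G p"
proof -
  have "(F has_derivative f') (at p) \<longleftrightarrow> (G has_derivative f') (at p)" for f'
    using has_derivative_transform_within_open[OF _ assms(1,2), of F f' UNIV G]
      has_derivative_transform_within_open[OF _ assms(1,2), of G f' UNIV F] assms(3) by auto
  then show ?thesis unfolding d_def frechet_derivative_def by simp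
qed

lemma d_works:
  assumes "open U" "F differentiable_on U" "p \<in> U"
  shows "(F has_derivative d F p) (at p)"
  using assms differentiable_on_eq_differentiable_at frechet_derivative_works d_def by metis

lemma d_lin:
  assumes "open U" "F differentiable_on U" "p \<in> U"
  shows "linear (d F p)"
  using d_works[OF assms] has_derivative_linear by blast

lemma diffon_cong:
  fixes F G :: "complex \<Rightarrow> quat"
  assumes "open U" "\<And>z. z \<in> U \<Longrightarrow> F z = G z" "G differentiable_on U"
  shows "F differentiable_on U"
proof -
  have "F differentiable at p" if "p \<in> U" for p
  proof -
    have "(G has_derivative d G p) (at p)" by (rule d_works[OF assms(1,3) that])
    then have "(F has_derivative d G p) (at p)"
      by (rule has_derivative_transform_within_open[OF _ assms(1) that]) (simp add: assms(2))
    then show ?thesis unfolding differentiable_def by blast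
  qed
  then show ?thesis using assms(1) differentiable_on_eq_differentiable_at by blast
qed

lemma d_comb:
  fixes g1 g2 :: "complex \<Rightarrow> quat"
  assumes "(g1 has_derivative D1) (at p)" "(g2 has_derivative D2) (at p)"
  shows "d (\<lambda>z. g1 z * P + g2 z * Q) p = (\<lambda>Y. D1 Y * P + D2 Y * Q)"
proof -
  have "((\<lambda>z. g1 z * P + g2 z * Q) has_derivative (\<lambda>Y. D1 Y * P + D2 Y * Q)) (at p)"
    using assms by (auto intro!: derivative_intros)
  then show ?thesis unfolding d_def by (rule frechet_derivative_at[symmetric])
qed

lemma d_neg:
  fixes g :: "complex \<Rightarrow> quat"
  assumes "(g has_derivative D) (at p)"
  shows "d (\<lambda>z. - g z) p = (\<lambda>Y. - D Y)"
proof -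
  have "((\<lambda>z. - g z) has_derivative (\<lambda>Y. - D Y)) (at p)"
    using assms by (auto intro!: derivative_intros)
  then show ?thesis unfolding d_def by (rule frechet_derivative_at[symmetric])
qed

locale mf =
  fixes U :: "complex set" and f fs R :: "complex \<Rightarrow> quat"
  assumes U: "open U" and mci: "minimal_conformal_immersion U f"
    and rn: "is_right_normal U f R" and cjg: "is_conjugate U f fs"
begin

lemma fdiff: "f differentiable_on U"
  using mci by (simp add: minimal_conformal_immersion_def conformal_immersion_def)

lemma fsdiff: "fs differentiable_on U"
  using cjg by (simp add: is_conjugate_def)

lemma fder: "z \<in> U \<Longrightarrow> (f has_derivative d f z) (at z)"
  by (rule d_works[OF U fdiff])

lemma fsder: "z \<in> U \<Longrightarrow> (fs has_derivative d fs z) (at z)"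
  by (rule d_works[OF U fsdiff])

lemma flin: "z \<in> U \<Longrightarrow> linear (d f z)"
  by (rule d_lin[OF U fdiff])

lemma fs_d: "z \<in> U \<Longrightarrow> d fs z X = d f z X * R z"
  using cjg rn by (simp add: is_conjugate_def is_right_normal_def)

lemma fs_d2: "z \<in> U \<Longrightarrow> d fs z X = - d f z (\<i> * X)"
  using cjg by (simp add: is_conjugate_def hodge_d_def)

lemma df_nz: "z \<in> U \<Longrightarrow> X \<noteq> 0 \<Longrightarrow> d f z X \<noteq> 0"
proof -
  assume z: "z \<in> U" and X: "X \<noteq> 0"
  have "inj (d f z)" using mci z by (simp add: minimal_conformal_immersion_def conformal_immersion_def)
  moreover have "d f z 0 = 0" using flin[OF z] by (rule linear_0)
  ultimately show ?thesis using X by (metis injD)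
qed

lemma RR: "z \<in> U \<Longrightarrow> R z * R z = -1"
proof -
  assume z: "z \<in> U"
  obtain N R0 where R0: "R0 * R0 = -1" "\<And>X. hodge_d f z X = - (d f z X * R0)"
    using mci z by (auto simp: minimal_conformal_immersion_def conformal_immersion_def)
  have h: "hodge_d f z 1 = - (d f z 1 * R z)" using rn z by (simp add: is_right_normal_def)
  have "d f z 1 * R0 = d f z 1 * R z" using R0(2)[of 1] unfolding h by (metis neg_equal_iff_equal)
  then have "R0 = R z" using df_nz[OF z, of 1] by (metis mult_left_cancel one_neq_zero)
  with R0 show ?thesis by simp
qed

lemma hf1: "(\<lambda>z. d f z X) differentiable_on U"
  using mci by (simp add: minimal_conformal_immersion_def harmonic_on_def)

lemma hf2: "p \<in> U \<Longrightarrow> d (\<lambda>z. d f z 1) p 1 + d (\<lambda>z. d f z \<i>) p \<i> = 0"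
  using mci by (simp add: minimal_conformal_immersion_def harmonic_on_def)

lemma mixed: "p \<in> U \<Longrightarrow> d (\<lambda>z. d f z 1) p \<i> = d (\<lambda>z. d f z \<i>) p 1"
proof -
  assume p: "p \<in> U"
  obtain r where r: "r > 0" "ball p r \<subseteq> U" using U p open_contains_ball by blast
  show ?thesis
  proof (rule young[OF r(1)])
    show "(f has_derivative d f z) (at z)" if "z \<in> ball p r" for z
      using fder that r(2) by blast
    show "((\<lambda>z. d f z 1) has_derivative d (\<lambda>z. d f z 1) p) (at p)"
      by (rule d_works[OF U hf1 p])
    show "((\<lambda>z. d f z \<i>) has_derivative d (\<lambda>z. d f z \<i>) p) (at p)"
      by (rule d_works[OF U hf1 p])
  qed
qed

lemma hfs1: "(\<lambda>z. d fs z X) differentiable_on U"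
  by (rule diffon_cong[OF U, of _ "\<lambda>z. - d f z (\<i> * X)"]) (simp_all add: fs_d2 hf1)

lemma hfs2: "p \<in> U \<Longrightarrow> d (\<lambda>z. d fs z 1) p 1 + d (\<lambda>z. d fs z \<i>) p \<i> = 0"
proof -
  assume p: "p \<in> U"
  have 1: "d (\<lambda>z. d fs z 1) p = d (\<lambda>z. - d f z \<i>) p"
    by (rule d_cong[OF U p]) (simp add: fs_d2)
  have 2: "d (\<lambda>z. - d f z \<i>) p = (\<lambda>Y. - d (\<lambda>z. d f z \<i>) p Y)"
    by (rule d_neg[OF d_works[OF U hf1 p]])
  have 3: "d (\<lambda>z. d fs z \<i>) p = d (\<lambda>z. d f z 1) p"
  proof (rule d_cong[OF U p])
    fix z assume z: "z \<in> U"
    have "d fs z \<i> = - d f z (-1)" by (simp add: fs_d2 z)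
    also have "\<dots> = d f z 1" using linear_neg[OF flin[OF z], of 1] by simp
    finally show "d fs z \<i> = d f z 1" .
  qed
  show ?thesis unfolding 1 2 3 using mixed[OF p] by simp
qed

end



context mf begin

lemma comb_d:
  assumes z: "z \<in> U"
  shows "d (\<lambda>z. f z * P + fs z * Q) z X = d f z X * (P + R z * Q)"
proof -
  have "d (\<lambda>z. f z * P + fs z * Q) z = (\<lambda>Y. d f z Y * P + d fs z Y * Q)"
    by (rule d_comb[OF fder[OF z] fsder[OF z]])
  then show ?thesis by (simp add: fs_d z algebra_simps)
qed

lemma comb_mci:
  assumes W0: "\<And>z. z \<in> U \<Longrightarrow> P + R z * Q \<noteq> 0"
  shows "minimal_conformal_immersion U (\<lambda>z. f z * P + fs z * Q)"
proof -
  let ?F = "\<lambda>z. f z * P + fs z * Q"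
  have Fdiff: "?F differentiable_on U" using fdiff fsdiff by (auto intro!: derivative_intros)
  have conf: "conformal_immersion U ?F"
    unfolding conformal_immersion_def
  proof (intro conjI ballI Fdiff)
    fix z assume z: "z \<in> U"
    let ?W = "P + R z * Q"
    have W: "?W \<noteq> 0" using W0 z .
    have dF: "d ?F z X = d f z X * ?W" for X by (rule comb_d[OF z])
    have injf: "inj (d f z)" using mci z by (simp add: minimal_conformal_immersion_def conformal_immersion_def)
    show "inj (d ?F z)"
    proof (rule injI)
      fix X Y assume "d ?F z X = d ?F z Y"
      then have "d f z X = d f z Y" using W unfolding dF by simp
      then show "X = Y" using injf by (simp add: inj_eq)
    qed
    obtain N R0 where N: "N * N = -1" "\<And>X. hodge_d f z X = N * d f z X"
      using mci z by (auto simp: minimal_conformal_immersion_def conformal_immersion_def)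
    have hF: "hodge_d ?F z X = hodge_d f z X * ?W" for X
      by (simp add: hodge_d_def dF)
    let ?RF = "inverse ?W * R z * ?W"
    have "?RF * ?RF = inverse ?W * (R z * (?W * inverse ?W) * R z) * ?W"
      by (simp add: mult.assoc)
    also have "\<dots> = -1" using W RR[OF z] by (simp add: mult.assoc)
    finally have RF2: "?RF * ?RF = -1" .
    have "hodge_d ?F z X = N * d ?F z X" for X by (simp add: hF N dF mult.assoc)
    moreover have "hodge_d ?F z X = - (d ?F z X * ?RF)" for X
    proof -
      have "hodge_d ?F z X = - (d f z X * R z) * ?W" using rn z by (simp add: hF is_right_normal_def)
      also have "\<dots> = - (d f z X * (?W * inverse ?W) * R z * ?W)" using W by (simp add: mult.assoc)
      also have "\<dots> = - (d ?F z X * ?RF)" by (simp add: dF mult.assoc)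
      finally show ?thesis .
    qed
    ultimately show "\<exists>N R. N * N = -1 \<and> R * R = -1 \<and> (\<forall>X. hodge_d ?F z X = N * d ?F z X) \<and>
        (\<forall>X. hodge_d ?F z X = - (d ?F z X * R))"
      using N(1) RF2 by blast
  qed
  have harm: "harmonic_on U ?F"
    unfolding harmonic_on_def
  proof (intro conjI allI ballI Fdiff)
    fix X
    show "(\<lambda>z. d ?F z X) differentiable_on U"
    proof (rule diffon_cong[OF U, of _ "\<lambda>z. d f z X * P + d fs z X * Q"])
      show "d ?F z X = d f z X * P + d fs z X * Q" if "z \<in> U" for z
        by (simp add: d_comb[OF fder[OF that] fsder[OF that]])
      show "(\<lambda>z. d f z X * P + d fs z X * Q) differentiable_on U"
        using hf1 hfs1 by (auto intro!: derivative_intros)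
    qed
  next
    fix p assume p: "p \<in> U"
    have e: "d (\<lambda>z. d ?F z X) p = (\<lambda>Y. d (\<lambda>z. d f z X) p Y * P + d (\<lambda>z. d fs z X) p Y * Q)" for X
    proof -
      have "d (\<lambda>z. d ?F z X) p = d (\<lambda>z. d f z X * P + d fs z X * Q) p"
        by (rule d_cong[OF U p]) (simp add: d_comb[OF fder fsder])
      also have "\<dots> = (\<lambda>Y. d (\<lambda>z. d f z X) p Y * P + d (\<lambda>z. d fs z X) p Y * Q)"
        by (rule d_comb[OF d_works[OF U hf1 p] d_works[OF U hfs1 p]])
      finally show ?thesis .
    qed
    have "d (\<lambda>z. d ?F z 1) p 1 + d (\<lambda>z. d ?F z \<i>) p \<i>
       = (d (\<lambda>z. d f z 1) p 1 + d (\<lambda>z. d f z \<i>) p \<i>) * P + (d (\<lambda>z. d fs z 1) p 1 + d (\<lambda>z. d fs z \<i>) p \<i>) * Q"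
      unfolding e by (simp add: algebra_simps)
    then show "d (\<lambda>z. d ?F z 1) p 1 + d (\<lambda>z. d ?F z \<i>) p \<i> = 0"
      using hf2[OF p] hfs2[OF p] by simp
  qed
  show ?thesis using conf harm by (simp add: minimal_conformal_immersion_def)
qed

lemma comb_conj:
  "is_conjugate U (\<lambda>z. f z * P + fs z * Q) (\<lambda>z. fs z * P - f z * Q)"
  unfolding is_conjugate_def
proof (intro conjI ballI allI)
  show "(\<lambda>z. fs z * P - f z * Q) differentiable_on U" using fdiff fsdiff by (auto intro!: derivative_intros)
  fix z X assume z: "z \<in> U"
  have e: "(\<lambda>z. fs z * P - f z * Q) = (\<lambda>z. fs z * P + f z * (- Q))" by (simp add: fun_eq_iff)
  have "d (\<lambda>z. fs z * P - f z * Q) z X = d fs z X * P + d f z X * (- Q)"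
    unfolding e d_comb[OF fsder[OF z] fder[OF z]] by (rule refl)
  also have "\<dots> = d f z X * (R z * P) - d f z X * Q" by (simp add: fs_d z mult.assoc)
  also have "\<dots> = - hodge_d (\<lambda>z. f z * P + fs z * Q) z X"
  proof -
    have "hodge_d (\<lambda>z. f z * P + fs z * Q) z X = d f z (\<i> * X) * (P + R z * Q)"
      by (simp add: hodge_d_def comb_d[OF z])
    also have "\<dots> = - (d fs z X * (P + R z * Q))" by (simp add: fs_d2[OF z])
    also have "\<dots> = - (d f z X * (R z * P) + d f z X * ((R z * R z) * Q))"
      by (simp add: fs_d[OF z] algebra_simps)
    also have "\<dots> = - (d f z X * (R z * P) - d f z X * Q)" by (simp add: RR[OF z])
    finally show ?thesis by simp
  qed
  finally show "d (\<lambda>z. fs z * P - f z * Q) z X = - hodge_d (\<lambda>z. f z * P + fs z * Q) z X" .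
qed

lemma comb_rn:
  assumes "\<And>z. z \<in> U \<Longrightarrow> (P + R z * Q) * RF z = R z * (P + R z * Q)"
  shows "is_right_normal U (\<lambda>z. f z * P + fs z * Q) RF"
  unfolding is_right_normal_def
proof (intro ballI allI)
  fix z X assume z: "z \<in> U"
  have "hodge_d (\<lambda>z. f z * P + fs z * Q) z X = hodge_d f z X * (P + R z * Q)"
    by (simp add: hodge_d_def comb_d[OF z])
  also have "\<dots> = - (d f z X * (R z * (P + R z * Q)))" using rn z by (simp add: is_right_normal_def mult.assoc)
  also have "\<dots> = - (d f z X * ((P + R z * Q) * RF z))" using assms[OF z] by simp
  also have "\<dots> = - (d (\<lambda>z. f z * P + fs z * Q) z X * RF z)" by (simp add: comb_d[OF z] mult.assoc)
  finally show "hodge_d (\<lambda>z. f z * P + fs z * Q) z X = - (d (\<lambda>z. f z * P + fs z * Q) z X * RF z)" .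
qed

end



lemma fsharp_alg:
  fixes F Fs R \<rho> k b :: quat
  assumes RR: "R * R = -1" and P0: "\<rho> + R \<noteq> 0" and bk: "b = \<rho> * k" and kr: "k * \<rho> = \<rho> * k"
    and kp: "k * (1 + \<rho> * \<rho>) = -2"
  shows "(F * R - Fs) * inverse (R + \<rho>)
       = - (1/2) *\<^sub>R ((F * b + Fs * k) * ((\<rho> + R) * R * inverse (\<rho> + R)) - (Fs * b - F * k))"
proof -
  define P where "P = \<rho> + R"
  have P0': "P \<noteq> 0" using P0 by (simp add: P_def)
  have kr2: "\<rho> * (k * \<rho>) = k * (\<rho> * \<rho>)" using kr by (metis mult.assoc)
  have A: "b * P * R + k * P = (-2) *\<^sub>R R"
  proof -
    have "b * P * R + k * P = \<rho> * (k * \<rho>) * R + \<rho> * k * (R * R) + k * \<rho> + k * R"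
      by (simp add: bk P_def algebra_simps)
    also have "\<dots> = k * (1 + \<rho> * \<rho>) * R" unfolding kr2 RR using kr by (simp add: algebra_simps)
    also have "\<dots> = (-2) *\<^sub>R R" unfolding kp by (simp add: scaleR_conv_of_real)
    finally show ?thesis .
  qed
  have B: "k * P * R - b * P = 2 *\<^sub>R 1"
  proof -
    have "k * P * R - b * P = k * \<rho> * R + k * (R * R) - \<rho> * (k * \<rho>) - \<rho> * k * R"
      by (simp add: bk P_def algebra_simps)
    also have "\<dots> = - (k * (1 + \<rho> * \<rho>))" unfolding kr2 RR using kr by (simp add: algebra_simps)
    also have "\<dots> = 2 *\<^sub>R 1" unfolding kp by (simp add: scaleR_conv_of_real)
    finally show ?thesis .
  qed
  define X where "X = (F * b + Fs * k) * (P * R * inverse P) - (Fs * b - F * k)"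
  have "X * P = (F * b + Fs * k) * P * R * (inverse P * P) - (Fs * b - F * k) * P"
    by (simp add: X_def algebra_simps)
  also have "\<dots> = F * (b * P * R + k * P) + Fs * (k * P * R - b * P)"
    using P0' by (simp add: algebra_simps)
  also have "\<dots> = (-2) *\<^sub>R (F * R - Fs)" unfolding A B by (simp add: algebra_simps)
  finally have XP: "X * P = (-2) *\<^sub>R (F * R - Fs)" .
  have "(- (1/2) *\<^sub>R X) * P = F * R - Fs" by (simp add: XP)
  then have "- (1/2) *\<^sub>R X = (F * R - Fs) * inverse P"
    using P0' by (metis mult.assoc right_inverse mult_1_right)
  then show ?thesis by (simp add: X_def P_def add.commute)
qed



theorem mainTheorem19:
  fixes U :: "complex set" and f fs R :: "complex \<Rightarrow> quat"
    and \<mu> :: complex and m :: quat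
  assumes "open U" and "connected U" and "simply_connected U"
    and "minimal_conformal_immersion U f"
    and "is_right_normal U f R"
    and "is_conjugate U f fs"
    and "\<mu> \<noteq> 0" and "\<mu> \<noteq> 1" and "m \<noteq> 0"
  defines "a \<equiv> m * quat_of_complex ((\<mu> + inverse \<mu>) / 2) * inverse m"
    and "b \<equiv> m * quat_of_complex (\<i> * (inverse \<mu> - \<mu>) / 2) * inverse m"
    and "\<rho> \<equiv> m * quat_of_complex (\<i> * (1 + \<mu>) / (1 - \<mu>)) * inverse m"
  defines "h \<equiv> \<lambda>z. f z * b + fs z * (a - 1)"
    and "hs \<equiv> \<lambda>z. fs z * b - f z * (a - 1)"
    and "Rh \<equiv> \<lambda>z. (\<rho> + R z) * R z * inverse (\<rho> + R z)"
  defines "fsharp \<equiv> \<lambda>z. (f z * R z - fs z) * inverse (R z + \<rho>)"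
    and "g \<equiv> \<lambda>z. - (1/2) *\<^sub>R h z"
  shows "minimal_conformal_immersion U h \<and> in_right_assoc_family U f fs h
       \<and> is_conjugate U h hs \<and> is_right_normal U h Rh
       \<and> (\<forall>z\<in>U. fsharp z = - (1/2) *\<^sub>R (h z * Rh z - hs z))
       \<and> minimal_conformal_immersion U g \<and> in_right_assoc_family U f fs g
       \<and> is_right_normal U g Rh \<and> is_conjugate U g (\<lambda>z. - (1/2) *\<^sub>R hs z)
       \<and> (\<forall>z\<in>U. fsharp z = assoc_willmore g Rh (\<lambda>z. - (1/2) *\<^sub>R hs z) z)"
proof -
  interpret mf U f fs R using assms(1,4,5,6) by unfold_locales
  note pa = pointalg[OF assms(7,8,9), folded a_def b_def \<rho>_def]
  define k where "k = a - 1"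
  have W: "b + R z * k = (\<rho> + R z) * k" if "z \<in> U" for z
    using pa(1)[OF RR[OF that]] by (simp add: k_def algebra_simps)
  have Wnz: "b + R z * k \<noteq> 0" if "z \<in> U" for z
    unfolding W[OF that] using pa(2,3)[OF RR[OF that]] by (simp add: k_def)
  have WR: "(b + R z * k) * Rh z = R z * (b + R z * k)" if z: "z \<in> U" for z
  proof -
    have P0: "\<rho> + R z \<noteq> 0" using pa(3)[OF RR[OF z]] .
    have "(b + R z * k) * Rh z = ((\<rho> + R z) * k * (\<rho> + R z) * R z) * inverse (\<rho> + R z)"
      by (simp add: W[OF z] Rh_def mult.assoc)
    also have "\<dots> = (R z * ((\<rho> + R z) * k * (\<rho> + R z))) * inverse (\<rho> + R z)"
      using pa(6)[OF RR[OF z]] by (simp add: k_def)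
    also have "\<dots> = R z * ((\<rho> + R z) * k) * ((\<rho> + R z) * inverse (\<rho> + R z))"
      by (simp add: mult.assoc)
    also have "\<dots> = R z * (b + R z * k)" using P0 by (simp add: W[OF z])
    finally show ?thesis .
  qed
  have hh: "h = (\<lambda>z. f z * b + fs z * k)" by (simp add: h_def k_def)
  have hhs: "hs = (\<lambda>z. fs z * b - f z * k)" by (simp add: hs_def k_def)
  define Pg where "Pg = - (1/2) *\<^sub>R b"
  define Qg where "Qg = - (1/2) *\<^sub>R k"
  have gg: "g = (\<lambda>z. f z * Pg + fs z * Qg)"
    by (simp add: g_def hh Pg_def Qg_def fun_eq_iff scaleR_right_distrib)
  have ggs: "(\<lambda>z. - (1/2) *\<^sub>R hs z) = (\<lambda>z. fs z * Pg - f z * Qg)"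
    by (simp add: hhs Pg_def Qg_def fun_eq_iff scaleR_right_diff_distrib)
  have Wg: "Pg + R z * Qg = - (1/2) *\<^sub>R (b + R z * k)" for z
    by (simp add: Pg_def Qg_def scaleR_right_distrib)
  have c1: "minimal_conformal_immersion U h" unfolding hh using Wnz by (rule comb_mci)
  have c2: "in_right_assoc_family U f fs h" unfolding hh in_right_assoc_family_def by blast
  have c3: "is_conjugate U h hs" unfolding hh hhs by (rule comb_conj)
  have c4: "is_right_normal U h Rh" unfolding hh by (rule comb_rn) (rule WR)
  have c5: "\<forall>z\<in>U. fsharp z = - (1/2) *\<^sub>R (h z * Rh z - hs z)"
  proof
    fix z assume z: "z \<in> U"
    show "fsharp z = - (1/2) *\<^sub>R (h z * Rh z - hs z)"
      unfolding fsharp_def hh hhs Rh_def k_def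
      by (rule fsharp_alg[OF RR[OF z] pa(3,1,4,5)[OF RR[OF z]]])
  qed
  have c6: "minimal_conformal_immersion U g" unfolding gg
    by (rule comb_mci) (simp add: Wg Wnz)
  have c7: "in_right_assoc_family U f fs g" unfolding gg in_right_assoc_family_def by blast
  have c8: "is_right_normal U g Rh" unfolding gg
    by (rule comb_rn) (simp add: Wg WR)
  have c9: "is_conjugate U g (\<lambda>z. - (1/2) *\<^sub>R hs z)" unfolding gg ggs by (rule comb_conj)
  have c10: "\<forall>z\<in>U. fsharp z = assoc_willmore g Rh (\<lambda>z. - (1/2) *\<^sub>R hs z) z"
    using c5 by (simp add: assoc_willmore_def g_def scaleR_right_diff_distrib)
  show ?thesis using c1 c2 c3 c4 c5 c6 c7 c8 c9 c10 by blast
qed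


end
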